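(* Let $(\Sigma,E)$ be an algebraic theory with free monad $T$, and let $(X,I)$ be a $(\Sigma^{\mathrm{s}},E^{\mathrm{s}})$-algebra. Then the assignment $\alpha:TX\to X$, $\alpha(\overline{t})=I(t)_{I(\mathsf{a})}$ for $\Sigma$-terms $t$ over $X$, is a well-defined function, i.e. $I(t)_{I(\mathsf{a})}=I(s)_{I(\mathsf{a})}$ whenever $\overline{t}=\overline{s}$ in $TX$.
   Context: $T=T_{\Sigma,E}$: $TX$ is the set of $\Sigma$-terms over $X$ modulo the smallest congruence containing all substitution instances of $E$; $\overline{t}$ denotes the class of $t$. For a $\Sigma^{\mathrm{s}}$-algebra $(X,I)$ and a function $f:X\to X$, $I(t)_f$ is the value of the $\Sigma$-term $t$ over $X$ obtained by sending each element $x$ occurring as a variable to $f(x)$ and interpreting operations via $I$; here $f=I(\mathsf{a})$. The theory $(\Sigma^{\mathrm{s}},E^{\mathrm{s}})$: $\Sigma^{\mathrm{s}}=\Sigma\uplus\{\mathsf{a}:1\}$ and $E^{\mathrm{s}}$ consists of $\mathsf{a}\mathsf{a}v_1=\mathsf{a}v_1$; $\mathsf{a}(\mathsf{op}(v_1,\dots,v_n))=\mathsf{op}(v_1,\dots,v_n)$ and $\mathsf{op}(\mathsf{a}v_1,\dots,\mathsf{a}v_n)=\mathsf{op}(v_1,\dots,v_n)$ for every $(\mathsf{op}:n)\in\Sigma$; and $t(\mathsf{a}v_1,\dots,\mathsf{a}v_n)=s(\mathsf{a}v_1,\dots,\mathsf{a}v_n)$ for every equation $t(v_1,\dots,v_n)=s(v_1,\dots,v_n)$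 in $E$. *)

theory Defs
  imports Main
begin

datatype ('o, 'v) trm = Var 'v | Op 'o "('o, 'v) trm list"

fun wf_trm :: "('o \<Rightarrow> nat) \<Rightarrow> 'v set \<Rightarrow> ('o, 'v) trm \<Rightarrow> bool" where
  "wf_trm ar V (Var v) = (v \<in> V)"
| "wf_trm ar V (Op f ts) = (length ts = ar f \<and> (\<forall>t\<in>set ts. wf_trm ar V t))"

fun subst :: "('v \<Rightarrow> ('o, 'w) trm) \<Rightarrow> ('o, 'v) trm \<Rightarrow> ('o, 'w) trm" where
  "subst \<sigma> (Var v) = \<sigma> v"
| "subst \<sigma> (Op f ts) = Op f (map (subst \<sigma>) ts)"

fun eval :: "('o \<Rightarrow> 'x list \<Rightarrow> 'x) \<Rightarrow> ('v \<Rightarrow> 'x) \<Rightarrow> ('o, 'v) trm \<Rightarrow> 'x" where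
  "eval J \<rho> (Var v) = \<rho> v"
| "eval J \<rho> (Op f ts) = J f (map (eval J \<rho>) ts)"

definition algebraic_theory :: "('o \<Rightarrow> nat) \<Rightarrow> (('o, nat) trm \<times> ('o, nat) trm) set \<Rightarrow> bool" where
  "algebraic_theory ar E \<longleftrightarrow> (\<forall>(l, r) \<in> E. wf_trm ar UNIV l \<and> wf_trm ar UNIV r)"

text \<open>The smallest congruence on \<Sigma>-terms over X containing all substitution instances of E;
  T X is the quotient by this relation.\<close>
inductive eqv :: "('o \<Rightarrow> nat) \<Rightarrow> (('o, nat) trm \<times> ('o, nat) trm) set \<Rightarrow> 'x set
    \<Rightarrow> ('o, 'x) trm \<Rightarrow> ('o, 'x) trm \<Rightarrow> bool"
  for ar E X where
  inst: "(l, r) \<in> E \<Longrightarrow> (\<forall>v. wf_trm ar X (\<sigma> v)) \<Longrightarrow> eqv ar E X (subst \<sigma> l) (subst \<sigma> r)"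
| refl: "wf_trm ar X t \<Longrightarrow> eqv ar E X t t"
| sym: "eqv ar E X t s \<Longrightarrow> eqv ar E X s t"
| trans: "eqv ar E X t s \<Longrightarrow> eqv ar E X s u \<Longrightarrow> eqv ar E X t u"
| cong: "length ts = ar f \<Longrightarrow> list_all2 (eqv ar E X) ts us \<Longrightarrow> eqv ar E X (Op f ts) (Op f us)"

text \<open>The signature \<Sigma>^s = \<Sigma> + {a : 1}: operation None is the new unary symbol a,
  Some f is the old symbol f.\<close>
definition ar_s :: "('o \<Rightarrow> nat) \<Rightarrow> 'o option \<Rightarrow> nat" where
  "ar_s ar = (\<lambda>g. case g of None \<Rightarrow> 1 | Some f \<Rightarrow> ar f)"

fun lift :: "('o, 'v) trm \<Rightarrow> ('o option, 'v) trm" where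
  "lift (Var v) = Var v"
| "lift (Op f ts) = Op (Some f) (map lift ts)"

definition A :: "('o option, 'v) trm \<Rightarrow> ('o option, 'v) trm" where
  "A t = Op None [t]"

definition Es :: "('o \<Rightarrow> nat) \<Rightarrow> (('o, nat) trm \<times> ('o, nat) trm) set
    \<Rightarrow> (('o option, nat) trm \<times> ('o option, nat) trm) set" where
  "Es ar E =
     {(A (A (Var 0)), A (Var 0))}
   \<union> {(A (Op (Some f) (map Var [0..<ar f])), Op (Some f) (map Var [0..<ar f])) | f. True}
   \<union> {(Op (Some f) (map (\<lambda>v. A (Var v)) [0..<ar f]), Op (Some f) (map Var [0..<ar f])) | f. True}
   \<union> {(subst (\<lambda>v. A (Var v)) (lift l), subst (\<lambda>v. A (Var v)) (lift r)) | l r. (l, r) \<in> E}"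

definition is_algebra :: "('o \<Rightarrow> nat) \<Rightarrow> 'x set \<Rightarrow> ('o \<Rightarrow> 'x list \<Rightarrow> 'x) \<Rightarrow> bool" where
  "is_algebra ar X I \<longleftrightarrow> (\<forall>f xs. length xs = ar f \<and> set xs \<subseteq> X \<longrightarrow> I f xs \<in> X)"

definition satisfies :: "'x set \<Rightarrow> ('o \<Rightarrow> 'x list \<Rightarrow> 'x) \<Rightarrow> (('o, 'v) trm \<times> ('o, 'v) trm) set \<Rightarrow> bool" where
  "satisfies X I Eqs \<longleftrightarrow>
     (\<forall>(l, r) \<in> Eqs. \<forall>\<rho>. (\<forall>v. \<rho> v \<in> X) \<longrightarrow> eval I \<rho> l = eval I \<rho> r)"

end

theory Submission
  imports Defs
begin

lemma eval_subst: "eval J \<rho> (subst \<sigma> t) = eval J (\<lambda>v. eval J \<rho> (\<sigma> v)) t"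
  by (induction t) (auto intro!: map_cong arg_cong[where f="J _"])

lemma eval_lift_A:
  "eval I \<rho> (subst (\<lambda>v. A (Var v)) (lift t)) = eval (\<lambda>f. I (Some f)) (\<lambda>v. I None [\<rho> v]) t"
  by (induction t) (auto simp: A_def intro!: map_cong arg_cong[where f="I _"])

lemma key:
  assumes alg: "is_algebra (ar_s ar) X I"
    and sat: "satisfies X I (Es ar E)"
  shows "wf_trm ar X t \<Longrightarrow> eval (\<lambda>f. I (Some f)) (\<lambda>x. I None [x]) t \<in> X \<and>
     I None [eval (\<lambda>f. I (Some f)) (\<lambda>x. I None [x]) t] = eval (\<lambda>f. I (Some f)) (\<lambda>x. I None [x]) t"
proof (induction t)
  case (Var x)
  have x: "x \<in> X" using Var by simp
  have "I None [x] \<in> X" using alg x unfolding is_algebra_def ar_s_def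
    by (metis (no_types, lifting) One_nat_def empty_subsetI insert_subset length_Cons list.set(1) list.set(2) list.size(3) option.case(1))
  moreover have "I None [I None [x]] = I None [x]"
  proof -
    have "(A (A (Var 0)), A (Var 0)) \<in> Es ar E" unfolding Es_def by simp
    with sat x show ?thesis unfolding satisfies_def A_def by fastforce
  qed
  ultimately show ?case by simp
next
  case (Op f ts)
  let ?J = "\<lambda>f. I (Some f)" and ?r = "\<lambda>x. I None [x]"
  define vals where "vals = map (eval ?J ?r) ts"
  have len: "length vals = ar f" using Op.prems by (simp add: vals_def)
  have vX: "set vals \<subseteq> X" using Op by (auto simp: vals_def)
  have inX: "I (Some f) vals \<in> X" using alg len vX unfolding is_algebra_def ar_s_def by auto
  define \<rho> where "\<rho> v = (if v < ar f then vals ! v else I (Some f) vals)" for v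
  have \<rho>X: "\<forall>v. \<rho> v \<in> X" using vX inX len by (auto simp: \<rho>_def)
  have m: "map \<rho> [0..<ar f] = vals" using len by (auto simp: \<rho>_def intro: nth_equalityI)
  have "(A (Op (Some f) (map Var [0..<ar f])), Op (Some f) (map Var [0..<ar f])) \<in> Es ar E"
    unfolding Es_def by blast
  with sat \<rho>X have "eval I \<rho> (A (Op (Some f) (map Var [0..<ar f]))) = eval I \<rho> (Op (Some f) (map Var [0..<ar f]))"
    unfolding satisfies_def by fastforce
  then have "I None [I (Some f) vals] = I (Some f) vals"
    using m by (simp add: A_def comp_def)
  then show ?case using inX by (simp add: vals_def)
qed

theorem lemma12:
  fixes ar :: "'o \<Rightarrow> nat" and E :: "(('o, nat) trm \<times> ('o, nat) trm) set"
    and X :: "'x set" and I :: "'o option \<Rightarrow> 'x list \<Rightarrow> 'x"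
    and t s :: "('o, 'x) trm"
  assumes "algebraic_theory ar E"
    and "is_algebra (ar_s ar) X I"
    and "satisfies X I (Es ar E)"
    and "eqv ar E X t s"
  shows "eval (\<lambda>f. I (Some f)) (\<lambda>x. I None [x]) t = eval (\<lambda>f. I (Some f)) (\<lambda>x. I None [x]) s"
  using assms(4)
proof (induction rule: eqv.induct)
  case (inst l r \<sigma>)
  let ?J = "\<lambda>f. I (Some f)" and ?r = "\<lambda>x. I None [x]"
  define \<tau> where "\<tau> v = eval ?J ?r (\<sigma> v)" for v
  have k: "\<tau> v \<in> X \<and> I None [\<tau> v] = \<tau> v" for v
    unfolding \<tau>_def using key[OF assms(2,3)] inst.hyps(2) by blast
  have "(subst (\<lambda>v. A (Var v)) (lift l), subst (\<lambda>v. A (Var v)) (lift r)) \<in> Es ar E"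
    unfolding Es_def using inst.hyps(1) by blast
  with assms(3) k have "eval I \<tau> (subst (\<lambda>v. A (Var v)) (lift l)) = eval I \<tau> (subst (\<lambda>v. A (Var v)) (lift r))"
    unfolding satisfies_def by fastforce
  then have "eval ?J (\<lambda>v. I None [\<tau> v]) l = eval ?J (\<lambda>v. I None [\<tau> v]) r"
    by (simp add: eval_lift_A)
  then have "eval ?J \<tau> l = eval ?J \<tau> r" using k by simp
  moreover have "\<tau> = (\<lambda>v. eval ?J ?r (\<sigma> v))" by (simp add: \<tau>_def fun_eq_iff)
  ultimately show ?case by (simp add: eval_subst)
next
  case (cong ts f us)
  from cong(2) have "map (eval (\<lambda>f. I (Some f)) (\<lambda>x. I None [x])) ts = map (eval (\<lambda>f. I (Some f)) (\<lambda>x. I None [x])) us"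
    by (induction ts us rule: list_all2_induct) auto
  then show ?case by simp
qed auto

end
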